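(* Let $\mathcal G=(G,f,h)$ be a network dynamical system of size $N$ with maximum out-degree $\Delta(G)$, satisfying Assumptions 1 and 2. Suppose that for each $i\in[N]$ there are functions $\psi_i^1,\dots,\psi_i^{s_i}:\mathbb R^N\to\mathbb R$ and nonzero coefficients $c_{i,1},\dots,c_{i,s_i}\in\mathbb R$ such that every trajectory of the system satisfies $x_i(t+1)=\sum_{l=1}^{s_i}c_{i,l}\psi_i^l(x(t))$ for all $t$; let $s_{\max}=\max_i s_i$. For each $q\in[N]$ fix a $q$-pinching initial condition with trajectory $x^q(t)$, and for each $i$ let $\Psi_i\in\mathbb R^{Ns_{\max}\times s_i}$ be the matrix whose row indexed by the pair $(q,t)$, $q\in[N]$, $t\in\{0,\dots,s_{\max}-1\}$, is $(\psi_i^1(x^q(t)),\dots,\psi_i^{s_i}(x^q(t)))$; assume $\operatorname{rank}\Psi_i=s_i$ for all $i$. Let $\phi_q\in\mathbb R^{P\times N}$, $q\in[N]$, satisfy $\delta_{2(\Delta(G)+1)^{s_{\max}}}(\phi_q)<\sqrt2-1$, and let $y^q(t)=\phi_q x^q(t)$ for $t=1,\dots,s_{\max}$. Then: (a) for every $q\in[N]$ and $t\in\{1,\dots,s_{\max}\}$, the problem $\min_{\tilde x}\|\tilde x\|_1$ subject to $\phi_q\tilde x=y^q(t)$ has the unique solution $x^q(t)$; (b) $\operatorname{supp}(x^q(1))\setminus\{q\}=L_1(q)$ for every $q$, so the adjacency matrix is uniquely determined; (c) for each $i\in[N]$, letting $b_i\in\mathbb R^{Ns_{\max}}$ be the vector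 whose entry indexed by $(q,t)$ (same ordering as the rows of $\Psi_i$) is $x_i^q(t+1)$, the linear system $\Psi_i c=b_i$ has the unique solution $c=(c_{i,1},\dots,c_{i,s_i})^T$, and it equals $\Psi_i^\dagger b_i=(\Psi_i^T\Psi_i)^{-1}\Psi_i^Tb_i$.
   Context: Let $G$ be a directed graph on vertex set $[N]=\{1,\dots,N\}$ without self-loops, with adjacency matrix $A\in\{0,1\}^{N\times N}$, where $A_{ij}=1$ if and only if $i$ receives an edge (input) from $j$; in particular $A_{ii}=0$. The out-degree of $q\in[N]$ is $d_q=\#\{i: A_{iq}=1\}$, the maximum out-degree is $\Delta(G)=\max_{q}d_q$, and the first-level set of $q$ is $L_1(q)=\{i\in[N]: A_{iq}=1\}$. The network dynamical system $\mathcal G=(G,f,h)$ is the discrete-time system $x_i(t+1)=f_i(x_i(t))+\sum_{j=1}^N A_{ij}h_{ij}(x_i(t),x_j(t))$ for $i\in[N]$, $t=0,1,2,\dots$, where $f_i:\mathbb R\to\mathbb R$ and $h_{ij}:\mathbb R\times\mathbb R\to\mathbb R$; the state vector is $x(t)=(x_1(t),\dots,x_N(t))^T$. Assumption 1: $f_i(0)=0$ for all $i\in[N]$. Assumption 2: there is $\delta>0$ such that for all $i,j\in[N]$, $h_{ij}(0,0)=0$ and $h_{ij}(0,v)\neq 0$ for every $v$ with $0<|v|<\delta$. For $q\in[N]$, a $q$-pinching initial condition is $x^q(0)$ with $x^q_i(0)=\epsilon_q\delta_{iq}$ (Kronecker delta), where $0<|\epsilon_q|<\delta$; $x^q(t)$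 denotes the resulting trajectory. For $x\in\mathbb R^N$, $\operatorname{supp}(x)=\{i: x_i\neq0\}$ and $\|x\|_0=\#\operatorname{supp}(x)$; $x$ is $s$-sparse if $\|x\|_0\le s$. The restricted isometry constant $\delta_s(\phi)$ of $\phi\in\mathbb R^{P\times N}$ is the smallest number such that $(1-\delta_s(\phi))\|x\|_2^2\le\|\phi x\|_2^2\le(1+\delta_s(\phi))\|x\|_2^2$ for all $s$-sparse $x\in\mathbb R^N$. $\Psi^\dagger$ denotes the Moore–Penrose pseudoinverse. *)

theory Defs
  imports Complex_Main "Jordan_Normal_Form.DL_Rank" "Jordan_Normal_Form.Gauss_Jordan_Elimination"
begin

text \<open>Vertices are indexed 0-based by {..<N}. A is the real 0/1 adjacency matrix,
  A i j = 1 iff i receives an edge from j. States are functions nat => real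
  (only components < N are meaningful).\<close>

definition out_deg :: "nat \<Rightarrow> (nat \<Rightarrow> nat \<Rightarrow> real) \<Rightarrow> nat \<Rightarrow> nat" where
  "out_deg N A q = card {i. i < N \<and> A i q = 1}"

definition max_out_deg :: "nat \<Rightarrow> (nat \<Rightarrow> nat \<Rightarrow> real) \<Rightarrow> nat" where
  "max_out_deg N A = Max ((out_deg N A) ` {..<N})"

definition first_level :: "nat \<Rightarrow> (nat \<Rightarrow> nat \<Rightarrow> real) \<Rightarrow> nat \<Rightarrow> nat set" where
  "first_level N A q = {i. i < N \<and> A i q = 1}"

definition net_step :: "nat \<Rightarrow> (nat \<Rightarrow> real \<Rightarrow> real) \<Rightarrow> (nat \<Rightarrow> nat \<Rightarrow> real \<Rightarrow> real \<Rightarrow> real)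
    \<Rightarrow> (nat \<Rightarrow> nat \<Rightarrow> real) \<Rightarrow> (nat \<Rightarrow> real) \<Rightarrow> (nat \<Rightarrow> real)" where
  "net_step N f h A x = (\<lambda>i. if i < N then f i (x i) + (\<Sum>j<N. A i j * h i j (x i) (x j)) else 0)"

definition traj :: "nat \<Rightarrow> (nat \<Rightarrow> real \<Rightarrow> real) \<Rightarrow> (nat \<Rightarrow> nat \<Rightarrow> real \<Rightarrow> real \<Rightarrow> real)
    \<Rightarrow> (nat \<Rightarrow> nat \<Rightarrow> real) \<Rightarrow> (nat \<Rightarrow> real) \<Rightarrow> nat \<Rightarrow> (nat \<Rightarrow> real)" where
  "traj N f h A x0 t = ((net_step N f h A) ^^ t) x0"

definition pinch :: "real \<Rightarrow> nat \<Rightarrow> (nat \<Rightarrow> real)" where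
  "pinch eps q = (\<lambda>i. if i = q then eps else 0)"

definition supp_vec :: "real vec \<Rightarrow> nat set" where
  "supp_vec v = {i. i < dim_vec v \<and> v $ i \<noteq> 0}"

definition l1_norm :: "real vec \<Rightarrow> real" where
  "l1_norm v = (\<Sum>i<dim_vec v. \<bar>v $ i\<bar>)"

definition sq_norm :: "real vec \<Rightarrow> real" where
  "sq_norm v = (\<Sum>i<dim_vec v. (v $ i)^2)"

definition ric :: "nat \<Rightarrow> real mat \<Rightarrow> real" where
  "ric s phi = Inf {d. \<forall>x \<in> carrier_vec (dim_col phi). card (supp_vec x) \<le> s \<longrightarrow>
       (1 - d) * sq_norm x \<le> sq_norm (phi *\<^sub>v x) \<and> sq_norm (phi *\<^sub>v x) \<le> (1 + d) * sq_norm x}"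

definition l1_argmin :: "real mat \<Rightarrow> real vec \<Rightarrow> real vec set" where
  "l1_argmin phi y = {z \<in> carrier_vec (dim_col phi). phi *\<^sub>v z = y \<and>
       (\<forall>w \<in> carrier_vec (dim_col phi). phi *\<^sub>v w = y \<longrightarrow> l1_norm z \<le> l1_norm w)}"

definition is_pinv :: "real mat \<Rightarrow> real mat \<Rightarrow> bool" where
  "is_pinv M X \<longleftrightarrow> X \<in> carrier_mat (dim_col M) (dim_row M) \<and>
     M * X * M = M \<and> X * M * X = X \<and> transpose_mat (M * X) = M * X \<and> transpose_mat (X * M) = X * M"

definition pinv :: "real mat \<Rightarrow> real mat" where
  "pinv M = (THE X. is_pinv M X)"

text \<open>Psi_i: row index r = q * smax + t (q < N, t < smax) corresponds to the pair (q,t);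
  column l < s_i holds psi_i^l(x^q(t)).\<close>
definition Psi_mat :: "nat \<Rightarrow> nat \<Rightarrow> nat \<Rightarrow> (nat \<Rightarrow> nat \<Rightarrow> (nat \<Rightarrow> real)) \<Rightarrow> (nat \<Rightarrow> (nat \<Rightarrow> real) \<Rightarrow> real) \<Rightarrow> real mat" where
  "Psi_mat N smax si X psi_i = mat (N * smax) si (\<lambda>(r, l). psi_i l (X (r div smax) (r mod smax)))"

definition b_vec :: "nat \<Rightarrow> nat \<Rightarrow> (nat \<Rightarrow> nat \<Rightarrow> (nat \<Rightarrow> real)) \<Rightarrow> nat \<Rightarrow> real vec" where
  "b_vec N smax X i = vec (N * smax) (\<lambda>r. X (r div smax) (r mod smax + 1) i)"

end

theory Submission
  imports Defs
begin

lemma (in vec_space) ker_trivial: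
  assumes A: "A \<in> carrier_mat n nc" and r: "rank A = nc"
    and v: "v \<in> carrier_vec nc" and Av: "A *\<^sub>v v = 0\<^sub>v n"
  shows "v = 0\<^sub>v nc"
proof (rule ccontr)
  assume v0: "v \<noteq> 0\<^sub>v nc"
  show False
  proof (cases "distinct (cols A)")
    case True
    then have "lin_indpt (set (cols A))" using full_rank_lin_indpt r A by auto
    then show False using lin_depI[OF A v v0 Av] True by blast
  next
    case False
    obtain S where S: "maximal S (\<lambda>T. T \<subseteq> set (cols A) \<and> lin_indpt T)"
      using maximal_exists[of "(\<lambda>T. T \<subseteq> set (cols A) \<and> lin_indpt T)" "card (set (cols A))" "{}"]
      by (meson List.finite_set card_mono empty_iff empty_subsetI finite_lin_indpt2 rev_finite_subset)
    then have "card S \<le> card (set (cols A))" by (simp add: card_mono maximal_def)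
    moreover have "card (set (cols A)) < nc"
    proof -
      have "length (cols A) = nc" using A by simp
      moreover have "card (set (cols A)) \<noteq> length (cols A)" using False card_distinct by blast
      moreover have "card (set (cols A)) \<le> length (cols A)" by (rule card_length)
      ultimately show ?thesis by linarith
    qed
    ultimately have "card S < nc" by simp
    then show False using rank_card_indpt[OF A S] r by simp
  qed
qed

lemma self_scalar_zero:
  fixes w :: "real vec"
  assumes "w \<in> carrier_vec m" "w \<bullet> w = 0" shows "w = 0\<^sub>v m"
proof -
  have "(\<Sum>i\<in>{0..<m}. w $ i * w $ i) = 0" using assms by (simp add: scalar_prod_def)
  then have "\<forall>i\<in>{0..<m}. w $ i * w $ i = 0"
    by (subst sum_nonneg_eq_0_iff[symmetric]) auto
  then show ?thesis using assms(1) by (intro eq_vecI) auto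
qed

lemma ls_unique:
  fixes M :: "real mat"
  assumes M: "M \<in> carrier_mat m n" and r: "vec_space.rank m M = n"
    and c: "c \<in> carrier_vec n" and Mc: "M *\<^sub>v c = b"
  shows "{cv \<in> carrier_vec n. M *\<^sub>v cv = b} = {c}
     \<and> c = pinv M *\<^sub>v b
     \<and> (\<exists>B. mat_inverse (transpose_mat M * M) = Some B \<and> c = (B * transpose_mat M) *\<^sub>v b)"
proof -
  have ker: "\<And>v. v \<in> carrier_vec n \<Longrightarrow> M *\<^sub>v v = 0\<^sub>v m \<Longrightarrow> v = 0\<^sub>v n"
    using vec_space.ker_trivial[OF M r] by blast
  have uniq: "{cv \<in> carrier_vec n. M *\<^sub>v cv = b} = {c}"
  proof (intro equalityI subsetI)
    fix cv assume "cv \<in> {cv \<in> carrier_vec n. M *\<^sub>v cv = b}"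
    then have cv: "cv \<in> carrier_vec n" "M *\<^sub>v cv = b" by auto
    have "M *\<^sub>v (cv - c) = M *\<^sub>v cv - M *\<^sub>v c" using M cv c by (simp add: mult_minus_distrib_mat_vec)
    also have "\<dots> = 0\<^sub>v m" using cv Mc M by auto
    finally have "cv - c = 0\<^sub>v n" using ker cv c by auto
    have "cv $ i = c $ i" if "i < n" for i
    proof -
      have "(cv - c) $ i = 0" using \<open>cv - c = 0\<^sub>v n\<close> that by simp
      moreover have "(cv - c) $ i = cv $ i - c $ i" using cv c that by simp
      ultimately show ?thesis by simp
    qed
    then have "cv = c" using cv c by (intro eq_vecI) auto
    then show "cv \<in> {c}" by simp
  next
    fix x assume "x \<in> {c}" then show "x \<in> {cv \<in> carrier_vec n. M *\<^sub>v cv = b}" using c Mc by auto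
  qed
  define G where "G = transpose_mat M * M"
  have G: "G \<in> carrier_mat n n" using M unfolding G_def by auto
  have "det G \<noteq> 0"
  proof
    assume "det G = 0"
    then obtain v where v: "v \<in> carrier_vec n" "v \<noteq> 0\<^sub>v n" "G *\<^sub>v v = 0\<^sub>v n"
      using det_0_iff_vec_prod_zero[OF G] by blast
    have "(transpose_mat M *\<^sub>v (M *\<^sub>v v)) \<bullet> v = (M *\<^sub>v v) \<bullet> (M *\<^sub>v v)"
      by (rule transpose_vec_mult_scalar[OF M v(1)]) (use M v in auto)
    moreover have "transpose_mat M *\<^sub>v (M *\<^sub>v v) = G *\<^sub>v v" unfolding G_def using M v by auto
    ultimately have "(M *\<^sub>v v) \<bullet> (M *\<^sub>v v) = 0" using v by simp
    then have "M *\<^sub>v v = 0\<^sub>v m" using self_scalar_zero[of "M *\<^sub>v v" m] M by (simp add: carrier_vecI)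
    then show False using ker v by auto
  qed
  then have "G \<in> Units (ring_mat TYPE(real) n undefined)" using det_non_zero_imp_unit[OF G] by auto
  then have "mat_inverse G \<noteq> None" using mat_inverse(1)[OF G, where b=undefined] by auto
  then obtain B where B: "mat_inverse G = Some B" by auto
  note Bp = mat_inverse(2)[OF G B]
  have Bc: "B \<in> carrier_mat n n" using Bp by auto
  have MT: "transpose_mat M \<in> carrier_mat n m" using M by auto
  have BMM: "B * transpose_mat M * M = 1\<^sub>m n"
  proof -
    have "B * transpose_mat M * M = B * (transpose_mat M * M)" using Bc MT M by (rule assoc_mult_mat)
    then show ?thesis using Bp unfolding G_def by simp
  qed
  have GT: "transpose_mat G = G" unfolding G_def using M by (simp add: transpose_mult[OF MT M])
  have BT: "transpose_mat B = B"
  proof -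
    have "transpose_mat (G * B) = 1\<^sub>m n" using Bp by simp
    then have "transpose_mat B * G = 1\<^sub>m n" using transpose_mult[OF G Bc] GT by simp
    then have "transpose_mat B * G * B = B" using Bc by simp
    moreover have "transpose_mat B * G * B = transpose_mat B"
    proof -
      have "transpose_mat B * G * B = transpose_mat B * (G * B)"
        using Bc G by (intro assoc_mult_mat[of _ n n]) auto
      then show ?thesis using Bp Bc by simp
    qed
    ultimately show ?thesis by simp
  qed
  define X where "X = B * transpose_mat M"
  have Xc: "X \<in> carrier_mat n m" unfolding X_def using Bc MT by auto
  have XM: "X * M = 1\<^sub>m n" using BMM unfolding X_def .
  have cX: "c = X *\<^sub>v b"
  proof -
    have "X *\<^sub>v b = (X * M) *\<^sub>v c" using Mc Xc M c by auto
    then show ?thesis using XM c by auto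
  qed
  have pinvX: "is_pinv M X"
    unfolding is_pinv_def
  proof (intro conjI)
    show "X \<in> carrier_mat (dim_col M) (dim_row M)" using Xc M by auto
    show "M * X * M = M"
    proof -
      have "M * X * M = M * (X * M)" using M Xc by (intro assoc_mult_mat[of _ m n]) auto
      then show ?thesis using XM M by simp
    qed
    show "X * M * X = X" using XM M Xc by simp
    show "transpose_mat (X * M) = X * M" using XM by simp
    show "transpose_mat (M * X) = M * X"
    proof -
      have "transpose_mat (M * X) = transpose_mat X * transpose_mat M"
        by (rule transpose_mult[OF M Xc])
      also have "transpose_mat X = transpose_mat (transpose_mat M) * transpose_mat B"
        unfolding X_def by (rule transpose_mult[OF Bc MT])
      also have "\<dots> = M * B" using BT by simp
      also have "M * B * transpose_mat M = M * X" unfolding X_def using M Bc MT by simp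
      finally show ?thesis .
    qed
  qed
  have pinv_uniq: "\<And>Y. is_pinv M Y \<Longrightarrow> Y = X"
  proof -
    fix Y assume Y: "is_pinv M Y"
    then have Yc: "Y \<in> carrier_mat n m" and Y1: "M * Y * M = M" and Y3: "transpose_mat (M * Y) = M * Y"
      unfolding is_pinv_def using M by auto
    have "transpose_mat M = transpose_mat (M * Y * M)" using Y1 by simp
    also have "\<dots> = transpose_mat M * transpose_mat (M * Y)"
      using transpose_mult[of "M * Y" m m M n] M Yc by auto
    also have "\<dots> = transpose_mat M * (M * Y)" using Y3 by simp
    finally have "X = B * (transpose_mat M * (M * Y))" unfolding X_def by simp
    also have "transpose_mat M * (M * Y) = G * Y" unfolding G_def using MT M Yc by simp
    also have "B * (G * Y) = (B * G) * Y" using Bc G Yc by simp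
    also have "\<dots> = Y" using Bp Yc by simp
    finally show "Y = X" by simp
  qed
  have "pinv M = X" unfolding pinv_def using pinvX pinv_uniq by (rule the_equality)
  then show ?thesis using uniq cX B X_def G_def by auto
qed

lemma cs_sum:
  fixes a b :: "nat \<Rightarrow> real"
  assumes "finite T"
  shows "(\<Sum>i\<in>T. a i * b i)^2 \<le> (\<Sum>i\<in>T. (a i)^2) * (\<Sum>i\<in>T. (b i)^2)"
proof -
  define AA where "AA = (\<Sum>i\<in>T. (a i)^2)"
  define BB where "BB = (\<Sum>i\<in>T. (b i)^2)"
  define CC where "CC = (\<Sum>i\<in>T. a i * b i)"
  have q: "0 \<le> t^2 * AA - 2 * t * CC + BB" for t
  proof -
    have "0 \<le> (\<Sum>i\<in>T. (t * a i - b i)^2)" by (rule sum_nonneg) auto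
    also have "\<dots> = (\<Sum>i\<in>T. t^2 * (a i)^2 - 2 * t * (a i * b i) + (b i)^2)"
      by (rule sum.cong) (auto simp: power2_eq_square algebra_simps)
    also have "\<dots> = t^2 * AA - 2 * t * CC + BB"
      unfolding AA_def BB_def CC_def by (simp add: sum.distrib sum_subtractf sum_distrib_left)
    finally show ?thesis .
  qed
  show ?thesis
  proof (cases "AA = 0")
    case True
    then have "\<forall>i\<in>T. (a i)^2 = 0" unfolding AA_def using assms by (subst (asm) sum_nonneg_eq_0_iff) auto
    then have "CC = 0" unfolding CC_def by simp
    then show ?thesis unfolding AA_def[symmetric] BB_def[symmetric] CC_def[symmetric] using True by simp
  next
    case False
    then have A0: "AA > 0" unfolding AA_def by (metis sum_nonneg zero_le_power2 order_le_less)
    have "0 \<le> (CC/AA)^2 * AA - 2 * (CC/AA) * CC + BB" by (rule q)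
    also have "\<dots> = BB - CC^2 / AA" using A0 by (simp add: power2_eq_square field_simps)
    finally have "CC^2 / AA \<le> BB" by simp
    then have "CC^2 \<le> BB * AA" using A0 by (simp add: divide_le_eq)
    then show ?thesis unfolding AA_def[symmetric] BB_def[symmetric] CC_def[symmetric] by (simp add: mult.commute)
  qed
qed

lemma l1_le_sqrt_card:
  fixes h :: "nat \<Rightarrow> real"
  assumes "finite T"
  shows "(\<Sum>i\<in>T. \<bar>h i\<bar>) \<le> sqrt (card T) * sqrt (\<Sum>i\<in>T. (h i)^2)"
proof -
  have "(\<Sum>i\<in>T. 1 * \<bar>h i\<bar>)^2 \<le> (\<Sum>i\<in>T. 1^2) * (\<Sum>i\<in>T. \<bar>h i\<bar>^2)" by (rule cs_sum[OF assms])
  then have "(\<Sum>i\<in>T. \<bar>h i\<bar>)^2 \<le> card T * (\<Sum>i\<in>T. (h i)^2)" by simp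
  then have "sqrt ((\<Sum>i\<in>T. \<bar>h i\<bar>)^2) \<le> sqrt (card T * (\<Sum>i\<in>T. (h i)^2))" by (rule real_sqrt_le_mono)
  then show ?thesis by (simp add: real_sqrt_mult sum_nonneg)
qed

lemma top_subset:
  fixes g :: "nat \<Rightarrow> real"
  assumes "finite C" "k \<le> card C"
  shows "\<exists>B\<subseteq>C. card B = k \<and> (\<forall>i\<in>B. \<forall>j\<in>C - B. g j \<le> g i)"
  using assms(2)
proof (induction k)
  case 0 then show ?case by auto
next
  case (Suc k)
  then obtain B where B: "B \<subseteq> C" "card B = k" "\<forall>i\<in>B. \<forall>j\<in>C - B. g j \<le> g i" by auto
  have fB: "finite B" using B(1) assms(1) finite_subset by blast
  have "card (C - B) > 0" using Suc.prems B fB assms(1) by (simp add: card_Diff_subset)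
  then have ne: "C - B \<noteq> {}" "finite (C - B)" using card_gt_0_iff by blast+
  define m where "m = Max (g ` (C - B))"
  have "m \<in> g ` (C - B)" unfolding m_def using ne by (intro Max_in) auto
  then obtain i0 where i0: "i0 \<in> C - B" "g i0 = m" by auto
  have mx: "\<forall>j\<in>C - B. g j \<le> m" unfolding m_def using ne by auto
  show ?case
  proof (intro exI[of _ "insert i0 B"] conjI ballI)
    show "insert i0 B \<subseteq> C" using i0 B by auto
    show "card (insert i0 B) = Suc k" using i0 B fB by auto
    fix i j assume i: "i \<in> insert i0 B" and j: "j \<in> C - insert i0 B"
    show "g j \<le> g i"
      using i j mx i0 B(3) by auto
  qed
qed

lemma blocks_exist:
  fixes g :: "nat \<Rightarrow> real"
  assumes "finite C" "s > 0"
  shows "\<exists>Bs. (\<forall>k<length Bs. Bs ! k \<subseteq> C \<and> card (Bs ! k) \<le> s)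
          \<and> (\<forall>k<length Bs. \<forall>k'<length Bs. k \<noteq> k' \<longrightarrow> Bs ! k \<inter> Bs ! k' = {})
          \<and> (\<Union>k<length Bs. Bs ! k) = C
          \<and> (\<forall>k. Suc k < length Bs \<longrightarrow> card (Bs ! k) = s \<and>
                 (\<forall>i\<in>Bs ! k. \<forall>j\<in>Bs ! Suc k. g j \<le> g i))"
  using assms(1)
proof (induction "card C" arbitrary: C rule: less_induct)
  case less
  show ?case
  proof (cases "card C \<le> s")
    case True
    show ?thesis
      by (rule exI[of _ "[C]"]) (use True in auto)
  next
    case False
    obtain B where B: "B \<subseteq> C" "card B = s" "\<forall>i\<in>B. \<forall>j\<in>C - B. g j \<le> g i"
      using top_subset[OF less.prems, of s g] False by auto
    have fB: "finite B" using B(1) less.prems finite_subset by blast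
    have lt: "card (C - B) < card C" using B fB less.prems assms(2) False by (simp add: card_Diff_subset)
    have fin: "finite (C - B)" using less.prems by simp
    from less.hyps[OF lt fin] obtain Bs where Bs0: "(\<forall>k<length Bs. Bs ! k \<subseteq> C - B \<and> card (Bs ! k) \<le> s)
          \<and> (\<forall>k<length Bs. \<forall>k'<length Bs. k \<noteq> k' \<longrightarrow> Bs ! k \<inter> Bs ! k' = {})
          \<and> (\<Union>k<length Bs. Bs ! k) = C - B
          \<and> (\<forall>k. Suc k < length Bs \<longrightarrow> card (Bs ! k) = s \<and> (\<forall>i\<in>Bs ! k. \<forall>j\<in>Bs ! Suc k. g j \<le> g i))"
      ..
    note Bs = Bs0[THEN conjunct1] Bs0[THEN conjunct2, THEN conjunct1]
       Bs0[THEN conjunct2, THEN conjunct2, THEN conjunct1] Bs0[THEN conjunct2, THEN conjunct2, THEN conjunct2]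
    let ?L = "B # Bs"
    have h1: "\<forall>k<length ?L. ?L ! k \<subseteq> C \<and> card (?L ! k) \<le> s"
    proof (intro allI impI)
      fix k assume "k < length ?L"
      then show "?L ! k \<subseteq> C \<and> card (?L ! k) \<le> s"
        using Bs(1) B by (cases k) auto
    qed
    have h2: "\<forall>k<length ?L. \<forall>k'<length ?L. k \<noteq> k' \<longrightarrow> ?L ! k \<inter> ?L ! k' = {}"
    proof (intro allI impI)
      fix k k' assume k: "k < length ?L" and k': "k' < length ?L" and kk: "k \<noteq> k'"
      show "?L ! k \<inter> ?L ! k' = {}"
      proof (cases k)
        case 0
        then obtain m where "k' = Suc m" using kk by (cases k') auto
        then show ?thesis using 0 Bs(1) k' by auto
      next
        case (Suc m)
        show ?thesis
        proof (cases k')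
          case 0 then show ?thesis using Suc Bs(1) k by auto
        next
          case (Suc m') then show ?thesis using \<open>k = Suc m\<close> Bs(2) k k' kk by auto
        qed
      qed
    qed
    have h3: "(\<Union>k<length ?L. ?L ! k) = C"
    proof -
      have "(\<Union>k<length ?L. ?L ! k) = B \<union> (\<Union>k<length Bs. Bs ! k)"
        by (auto simp: lessThan_Suc_eq_insert_0 image_Suc_lessThan[symmetric])
      then show ?thesis using Bs(3) B(1) by auto
    qed
    have h4: "\<forall>k. Suc k < length ?L \<longrightarrow> card (?L ! k) = s \<and> (\<forall>i\<in>?L ! k. \<forall>j\<in>?L ! Suc k. g j \<le> g i)"
    proof (intro allI impI conjI ballI)
      fix k assume k: "Suc k < length ?L"
      show "card (?L ! k) = s" using k Bs(4) B(2) by (cases k) auto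
    next
      fix k i j assume k: "Suc k < length ?L" and i: "i \<in> ?L ! k" and j: "j \<in> ?L ! Suc k"
      show "g j \<le> g i"
      proof (cases k)
        case 0
        then have "j \<in> C - B" using j Bs(1) k by auto
        then show ?thesis using B(3) i 0 by auto
      next
        case (Suc m) then show ?thesis using Bs(4) k i j by auto
      qed
    qed
    show ?thesis using h1 h2 h3 h4 by blast
  qed
qed

definition lin :: "nat \<Rightarrow> (nat \<Rightarrow> nat \<Rightarrow> real) \<Rightarrow> (nat \<Rightarrow> real) \<Rightarrow> nat \<Rightarrow> real" where
  "lin N M z k = (\<Sum>j<N. M k j * z j)"
definition ipr :: "nat \<Rightarrow> nat \<Rightarrow> (nat \<Rightarrow> nat \<Rightarrow> real) \<Rightarrow> (nat \<Rightarrow> real) \<Rightarrow> (nat \<Rightarrow> real) \<Rightarrow> real" where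
  "ipr N P M u v = (\<Sum>k<P. lin N M u k * lin N M v k)"
definition nsq :: "nat \<Rightarrow> (nat \<Rightarrow> real) \<Rightarrow> real" where
  "nsq N z = (\<Sum>i<N. (z i)^2)"
definition rst :: "nat set \<Rightarrow> (nat \<Rightarrow> real) \<Rightarrow> nat \<Rightarrow> real" where
  "rst T z = (\<lambda>i. if i \<in> T then z i else 0)"
definition rip :: "nat \<Rightarrow> nat \<Rightarrow> (nat \<Rightarrow> nat \<Rightarrow> real) \<Rightarrow> real \<Rightarrow> nat \<Rightarrow> bool" where
  "rip N P M d S \<longleftrightarrow> (\<forall>z T. T \<subseteq> {..<N} \<longrightarrow> card T \<le> S \<longrightarrow> (\<forall>i. i \<notin> T \<longrightarrow> z i = 0) \<longrightarrow>
      (1 - d) * nsq N z \<le> ipr N P M z z \<and> ipr N P M z z \<le> (1 + d) * nsq N z)"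

lemma lin_comb: "lin N M (\<lambda>i. x * u i + y * v i) k = x * lin N M u k + y * lin N M v k"
  unfolding lin_def by (simp add: sum.distrib sum_distrib_left algebra_simps)

lemma ipr_comb: "ipr N P M (\<lambda>i. x * u i + y * v i) (\<lambda>i. x * u i + y * v i)
   = x^2 * ipr N P M u u + 2 * x * y * ipr N P M u v + y^2 * ipr N P M v v"
  unfolding ipr_def lin_comb
  by (simp add: sum.distrib sum_distrib_left algebra_simps power2_eq_square)

lemma nsq_comb:
  assumes "\<forall>i. u i * v i = 0"
  shows "nsq N (\<lambda>i. x * u i + y * v i) = x^2 * nsq N u + y^2 * nsq N v"
proof -
  have "nsq N (\<lambda>i. x * u i + y * v i) = (\<Sum>i<N. x^2 * (u i)^2 + y^2 * (v i)^2 + 2*x*y*(u i * v i))"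
    unfolding nsq_def by (rule sum.cong) (auto simp: power2_eq_square algebra_simps)
  also have "\<dots> = (\<Sum>i<N. x^2 * (u i)^2 + y^2 * (v i)^2)" using assms by simp
  finally show ?thesis unfolding nsq_def by (simp add: sum.distrib sum_distrib_left)
qed

lemma nsq_nonneg: "0 \<le> nsq N z" unfolding nsq_def by (rule sum_nonneg) auto

lemma nsq_zero: assumes "nsq N z = 0" "i < N" shows "z i = 0"
proof -
  have "\<forall>i\<in>{..<N}. (z i)^2 = 0" using assms(1) unfolding nsq_def
    by (subst (asm) sum_nonneg_eq_0_iff) auto
  then show ?thesis using assms(2) by auto
qed

lemma lin_cong: assumes "\<forall>i<N. u i = v i" shows "lin N M u = lin N M v"
  unfolding lin_def using assms by (intro ext sum.cong) auto

lemma lin_zero: assumes "\<forall>i<N. u i = 0" shows "lin N M u k = 0"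
  unfolding lin_def using assms by simp

lemma ipr_zero: assumes "\<forall>i<N. u i = 0" shows "ipr N P M u v = 0"
  unfolding ipr_def using lin_zero[OF assms] by simp

lemma ipr_sym: "ipr N P M u v = ipr N P M v u"
  unfolding ipr_def by (simp add: mult.commute)

lemma polar:
  assumes rip: "rip N P M d S" and UV: "U \<inter> V = {}" "U \<union> V \<subseteq> {..<N}" "card U + card V \<le> S"
    and u: "\<forall>i. i \<notin> U \<longrightarrow> u i = 0" and v: "\<forall>i. i \<notin> V \<longrightarrow> v i = 0"
  shows "\<bar>ipr N P M u v\<bar> \<le> d * sqrt (nsq N u) * sqrt (nsq N v)"
proof (cases "nsq N u = 0 \<or> nsq N v = 0")
  case True
  then show ?thesis
  proof
    assume "nsq N u = 0"
    then have "ipr N P M u v = 0" using nsq_zero ipr_zero by blast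
    then show ?thesis using \<open>nsq N u = 0\<close> by simp
  next
    assume "nsq N v = 0"
    then have "ipr N P M v u = 0" using nsq_zero ipr_zero by blast
    then have "ipr N P M u v = 0" using ipr_sym[of N P M u v] by simp
    then show ?thesis using \<open>nsq N v = 0\<close> by simp
  qed
next
  case False
  define a where "a = sqrt (nsq N u)"
  define b where "b = sqrt (nsq N v)"
  have a: "a > 0" "a^2 = nsq N u" unfolding a_def using False nsq_nonneg[of N u]
    by (auto simp: order_le_less)
  have b: "b > 0" "b^2 = nsq N v" unfolding b_def using False nsq_nonneg[of N v]
    by (auto simp: order_le_less)
  have uv0: "\<forall>i. u i * v i = 0" using u v UV(1) by auto
  have fin: "finite (U \<union> V)" using UV(2) finite_subset by blast
  have cardT: "card (U \<union> V) \<le> S" using card_Un_le[of U V] UV(3) by linarith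
  have R: "(1 - d) * 2 \<le> (1/a)^2 * ipr N P M u u + 2 * (1/a) * y * ipr N P M u v + y^2 * ipr N P M v v
         \<and> (1/a)^2 * ipr N P M u u + 2 * (1/a) * y * ipr N P M u v + y^2 * ipr N P M v v \<le> (1 + d) * 2"
    if y: "y^2 = 1 / b^2" for y
  proof -
    have n2: "nsq N (\<lambda>i. (1/a) * u i + y * v i) = 2"
      using nsq_comb[OF uv0, of N "1/a" y] a b y False by (simp add: power_divide)
    have van: "\<forall>i. i \<notin> U \<union> V \<longrightarrow> (1/a) * u i + y * v i = 0" using u v by auto
    have "(1 - d) * nsq N (\<lambda>i. (1/a) * u i + y * v i) \<le> ipr N P M (\<lambda>i. (1/a) * u i + y * v i) (\<lambda>i. (1/a) * u i + y * v i)
       \<and> ipr N P M (\<lambda>i. (1/a) * u i + y * v i) (\<lambda>i. (1/a) * u i + y * v i) \<le> (1 + d) * nsq N (\<lambda>i. (1/a) * u i + y * v i)"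
      using rip[unfolded rip_def, rule_format, of "U \<union> V" "\<lambda>i. (1/a) * u i + y * v i"] UV(2) cardT van by blast
    then show ?thesis unfolding n2 ipr_comb .
  qed
  have Rp: "(1 - d) * 2 \<le> (1/a)^2 * ipr N P M u u + 2 * (1/a) * (1/b) * ipr N P M u v + (1/b)^2 * ipr N P M v v"
           "(1/a)^2 * ipr N P M u u + 2 * (1/a) * (1/b) * ipr N P M u v + (1/b)^2 * ipr N P M v v \<le> (1 + d) * 2"
    using R[of "1/b"] by (simp_all add: power_divide)
  have Rm: "(1 - d) * 2 \<le> (1/a)^2 * ipr N P M u u + 2 * (1/a) * (-1/b) * ipr N P M u v + (-1/b)^2 * ipr N P M v v"
           "(1/a)^2 * ipr N P M u u + 2 * (1/a) * (-1/b) * ipr N P M u v + (-1/b)^2 * ipr N P M v v \<le> (1 + d) * 2"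
    using R[of "-1/b"] by (simp_all add: power_divide)
  have e1: "(-1/b)^2 = (1/b)^2" by (simp add: power2_eq_square)
  have e2: "2 * (1/a) * (-1/b) * ipr N P M u v = - (2 * ((1/a) * (1/b) * ipr N P M u v))" by simp
  have e3: "2 * (1/a) * (1/b) * ipr N P M u v = 2 * ((1/a) * (1/b) * ipr N P M u v)" by simp
  have "4 * ((1/a) * (1/b) * ipr N P M u v) \<le> 4 * d" using Rp(2) Rm(1) unfolding e1 e2 e3 by (simp add: algebra_simps)
  moreover have "- (4 * d) \<le> 4 * ((1/a) * (1/b) * ipr N P M u v)" using Rp(1) Rm(2) unfolding e1 e2 e3 by (simp add: algebra_simps)
  ultimately have "ipr N P M u v / (a * b) \<le> d" "- d \<le> ipr N P M u v / (a * b)" by auto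
  then have "ipr N P M u v \<le> d * (a * b)" "- (d * (a * b)) \<le> ipr N P M u v"
    using a b by (auto simp: divide_le_eq le_divide_eq)
  then show ?thesis unfolding a_def b_def by (simp add: mult.assoc)
qed

lemma lin_add: "lin N M (\<lambda>i. u i + v i) k = lin N M u k + lin N M v k"
  unfolding lin_def by (simp add: sum.distrib algebra_simps)

lemma lin_sum: "lin N M (\<lambda>i. \<Sum>x\<in>R. g x i) k = (\<Sum>x\<in>R. lin N M (g x) k)"
  unfolding lin_def by (simp add: sum_distrib_left sum.swap[of _ R])

lemma nsq_rst: assumes "S \<subseteq> {..<N}" shows "nsq N (rst S h) = (\<Sum>i\<in>S. (h i)^2)"
proof -
  have "nsq N (rst S h) = (\<Sum>i<N. if i \<in> S then (h i)^2 else 0)"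
    unfolding nsq_def rst_def by (rule sum.cong) auto
  also have "\<dots> = (\<Sum>i\<in>{..<N} \<inter> S. (h i)^2)" by (simp add: sum.inter_restrict)
  also have "{..<N} \<inter> S = S" using assms by auto
  finally show ?thesis .
qed

lemma nsp:
  fixes h :: "nat \<Rightarrow> real"
  assumes rip: "rip N P M d (2*s)" and s: "s > 0" and d: "0 \<le> d" "d < 1"
    and ker: "\<forall>k<P. lin N M h k = 0"
    and T0: "T0 \<subseteq> {..<N}" "card T0 \<le> s"
  shows "(1 - d) * (\<Sum>i\<in>T0. \<bar>h i\<bar>) \<le> sqrt 2 * d * (\<Sum>i\<in>{..<N} - T0. \<bar>h i\<bar>)"
proof -
  define C where "C = {..<N} - T0"
  have fC: "finite C" unfolding C_def by simp
  from blocks_exist[OF fC s, of "\<lambda>i. \<bar>h i\<bar>"] obtain Bs where Bs0: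
    "(\<forall>k<length Bs. Bs ! k \<subseteq> C \<and> card (Bs ! k) \<le> s)
          \<and> (\<forall>k<length Bs. \<forall>k'<length Bs. k \<noteq> k' \<longrightarrow> Bs ! k \<inter> Bs ! k' = {})
          \<and> (\<Union>k<length Bs. Bs ! k) = C
          \<and> (\<forall>k. Suc k < length Bs \<longrightarrow> card (Bs ! k) = s \<and>
                 (\<forall>i\<in>Bs ! k. \<forall>j\<in>Bs ! Suc k. \<bar>h j\<bar> \<le> \<bar>h i\<bar>))" ..
  define K where "K = length Bs"
  define B where "B = (\<lambda>k. Bs ! k)"
  have Bsub: "\<And>k. k < K \<Longrightarrow> B k \<subseteq> C" and Bcard: "\<And>k. k < K \<Longrightarrow> card (B k) \<le> s"
    using Bs0 unfolding K_def B_def by auto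
  have Bdisj: "\<And>k k'. k < K \<Longrightarrow> k' < K \<Longrightarrow> k \<noteq> k' \<Longrightarrow> B k \<inter> B k' = {}"
    using Bs0 unfolding K_def B_def by auto
  have Bun: "(\<Union>k<K. B k) = C" using Bs0 unfolding K_def B_def by auto
  have Bord: "\<And>k. Suc k < K \<Longrightarrow> card (B k) = s \<and> (\<forall>i\<in>B k. \<forall>j\<in>B (Suc k). \<bar>h j\<bar> \<le> \<bar>h i\<bar>)"
    using Bs0 unfolding K_def B_def by auto
  have BN: "\<And>k. k < K \<Longrightarrow> B k \<subseteq> {..<N}" using Bsub unfolding C_def by auto
  have BT0: "\<And>k. k < K \<Longrightarrow> B k \<inter> T0 = {}" using Bsub unfolding C_def by auto
  define T1 where "T1 = (if K = 0 then {} else B 0)"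
  define R where "R = {1..<K}"
  have T1C: "T1 \<subseteq> C" "card T1 \<le> s" using Bsub Bcard unfolding T1_def by auto
  have T1N: "T1 \<subseteq> {..<N}" using T1C unfolding C_def by auto
  have T01: "T0 \<inter> T1 = {}" using T1C unfolding C_def by auto
  have RK: "\<And>k. k \<in> R \<Longrightarrow> k < K \<and> k \<noteq> 0" unfolding R_def by auto
  have RT1: "\<And>k. k \<in> R \<Longrightarrow> B k \<inter> T1 = {}"
  proof -
    fix k assume "k \<in> R"
    then have "k < K" "k \<noteq> 0" using RK by auto
    then show "B k \<inter> T1 = {}" unfolding T1_def using Bdisj[of k 0] by auto
  qed
  define u0 where "u0 = rst T0 h"
  define u1 where "u1 = rst T1 h"
  define w where "w = (\<lambda>i. u0 i + u1 i)"
  define v where "v = (\<lambda>k. rst (B k) h)"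
  have decomp: "h i = w i + (\<Sum>k\<in>R. v k i)" if i: "i < N" for i
  proof (cases "i \<in> T0")
    case True
    then have "i \<notin> T1" using T01 by auto
    moreover have "\<forall>k\<in>R. v k i = 0" using BT0 RK True unfolding v_def rst_def by fastforce
    ultimately show ?thesis using True unfolding w_def u0_def u1_def rst_def by simp
  next
    case False
    then have "i \<in> C" unfolding C_def using i by auto
    then obtain k0 where k0: "k0 < K" "i \<in> B k0" using Bun by auto
    have uniq: "\<And>k. k < K \<Longrightarrow> i \<in> B k \<longleftrightarrow> k = k0" using Bdisj k0 by blast
    show ?thesis
    proof (cases "k0 = 0")
      case True
      then have "i \<in> T1" unfolding T1_def using k0 by auto
      moreover have "\<forall>k\<in>R. v k i = 0" using uniq RK True unfolding v_def rst_def by fastforce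
      ultimately show ?thesis using False unfolding w_def u0_def u1_def rst_def by simp
    next
      case False
      then have k0R: "k0 \<in> R" unfolding R_def using k0 by auto
      then have "i \<notin> T1" using RT1 k0 by auto
      moreover have "(\<Sum>k\<in>R. v k i) = (\<Sum>k\<in>R. if k = k0 then h i else 0)"
        using uniq RK unfolding v_def rst_def by (intro sum.cong) auto
      moreover have "\<dots> = h i" using k0R by (simp add: sum.delta[OF finite_atLeastLessThan] R_def)
      ultimately show ?thesis using \<open>i \<notin> T0\<close> unfolding w_def u0_def u1_def rst_def by simp
    qed
  qed
  have linw: "lin N M w k = - (\<Sum>k'\<in>R. lin N M (v k') k)" if k: "k < P" for k
  proof -
    have "lin N M h k = lin N M (\<lambda>i. w i + (\<Sum>k'\<in>R. v k' i)) k"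
      using lin_cong[of N h "\<lambda>i. w i + (\<Sum>k'\<in>R. v k' i)" M] decomp by auto
    also have "\<dots> = lin N M w k + (\<Sum>k'\<in>R. lin N M (v k') k)" by (simp add: lin_add lin_sum)
    finally show ?thesis using ker k by simp
  qed
  have iprww: "ipr N P M w w = - (\<Sum>k'\<in>R. ipr N P M w (v k'))"
  proof -
    have "ipr N P M w w = (\<Sum>k<P. lin N M w k * (- (\<Sum>k'\<in>R. lin N M (v k') k)))"
      unfolding ipr_def using linw by (intro sum.cong) auto
    also have "\<dots> = - (\<Sum>k'\<in>R. ipr N P M w (v k'))"
      unfolding ipr_def by (simp add: sum_distrib_left sum_negf sum.swap[of _ R])
    finally show ?thesis .
  qed
  have iprw: "ipr N P M w x = ipr N P M u0 x + ipr N P M u1 x" for x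
    unfolding ipr_def w_def lin_add by (simp add: sum.distrib algebra_simps)
  define a0 where "a0 = sqrt (nsq N u0)"
  define a1 where "a1 = sqrt (nsq N u1)"
  define aw where "aw = sqrt (nsq N w)"
  define bb where "bb = (\<lambda>k. sqrt (nsq N (v k)))"
  define l1 where "l1 = (\<lambda>S. \<Sum>i\<in>S. \<bar>h i\<bar>)"
  have u0van: "\<forall>i. i \<notin> T0 \<longrightarrow> u0 i = 0" unfolding u0_def rst_def by auto
  have u1van: "\<forall>i. i \<notin> T1 \<longrightarrow> u1 i = 0" unfolding u1_def rst_def by auto
  have vvan: "\<forall>i. i \<notin> B k \<longrightarrow> v k i = 0" for k unfolding v_def rst_def by auto
  have cross: "\<bar>ipr N P M u0 (v k)\<bar> \<le> d * a0 * bb k \<and> \<bar>ipr N P M u1 (v k)\<bar> \<le> d * a1 * bb k" if k: "k \<in> R" for k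
  proof
    have kK: "k < K" using RK k by auto
    show "\<bar>ipr N P M u0 (v k)\<bar> \<le> d * a0 * bb k" unfolding a0_def bb_def
      by (rule polar[OF rip _ _ _ u0van vvan]) (use BT0[OF kK] T0 BN[OF kK] Bcard[OF kK] in auto)
    show "\<bar>ipr N P M u1 (v k)\<bar> \<le> d * a1 * bb k" unfolding a1_def bb_def
      by (rule polar[OF rip _ _ _ u1van vvan]) (use RT1[OF k] T1N T1C BN[OF kK] Bcard[OF kK] in auto)
  qed
  have fR: "finite R" unfolding R_def by simp
  have up: "ipr N P M w w \<le> d * (a0 + a1) * (\<Sum>k\<in>R. bb k)"
  proof -
    have "ipr N P M w w = - (\<Sum>k\<in>R. ipr N P M u0 (v k) + ipr N P M u1 (v k))" using iprww iprw by simp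
    also have "\<dots> \<le> (\<Sum>k\<in>R. \<bar>ipr N P M u0 (v k)\<bar> + \<bar>ipr N P M u1 (v k)\<bar>)"
    proof -
      have "- (\<Sum>k\<in>R. ipr N P M u0 (v k) + ipr N P M u1 (v k)) = (\<Sum>k\<in>R. - (ipr N P M u0 (v k) + ipr N P M u1 (v k)))"
        by (rule sum_negf[symmetric])
      also have "\<dots> \<le> (\<Sum>k\<in>R. \<bar>ipr N P M u0 (v k)\<bar> + \<bar>ipr N P M u1 (v k)\<bar>)" by (rule sum_mono) auto
      finally show ?thesis .
    qed
    also have "\<dots> \<le> (\<Sum>k\<in>R. d * (a0 + a1) * bb k)"
      using cross by (intro sum_mono) (auto simp: algebra_simps intro: add_mono)
    also have "\<dots> = d * (a0 + a1) * (\<Sum>k\<in>R. bb k)" by (simp add: sum_distrib_left)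
    finally show ?thesis .
  qed
  have nsqw: "nsq N w = nsq N u0 + nsq N u1"
  proof -
    have "nsq N w = nsq N (\<lambda>i. 1 * u0 i + 1 * u1 i)" unfolding w_def by simp
    also have "\<dots> = nsq N u0 + nsq N u1" using T01 u0van u1van
      by (subst nsq_comb) auto
    finally show ?thesis .
  qed
  have a0a1: "a0 + a1 \<le> sqrt 2 * aw"
  proof -
    have "(a0 + a1)^2 \<le> 2 * (a0^2 + a1^2)"
    proof -
      have "0 \<le> (a0 - a1)^2" by simp
      then show ?thesis by (simp add: power2_eq_square algebra_simps)
    qed
    also have "a0^2 + a1^2 = nsq N w" unfolding a0_def a1_def nsqw using nsq_nonneg[of N u0] nsq_nonneg[of N u1] by simp
    finally have "a0 + a1 \<le> sqrt (2 * nsq N w)" by (rule real_le_rsqrt)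
    then show ?thesis unfolding aw_def by (simp add: real_sqrt_mult)
  qed
  have lowr: "(1 - d) * aw^2 \<le> ipr N P M w w"
  proof -
    have van: "\<forall>i. i \<notin> T0 \<union> T1 \<longrightarrow> w i = 0" using u0van u1van unfolding w_def by auto
    have "card (T0 \<union> T1) \<le> 2 * s" using card_Un_le[of T0 T1] T0 T1C by linarith
    then have "(1 - d) * nsq N w \<le> ipr N P M w w"
      using rip[unfolded rip_def, rule_format, of "T0 \<union> T1" w] T0 T1N van by blast
    then show ?thesis unfolding aw_def using nsq_nonneg by simp
  qed
  have bbk: "bb k \<le> l1 (B (k - 1)) / sqrt s" if k: "k \<in> R" for k
  proof -
    obtain k' where k': "k = Suc k'" using RK k by (cases k) auto
    have kK: "Suc k' < K" using RK k k' by auto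
    note o = Bord[OF kK]
    have fBk': "finite (B k')" using BN kK finite_subset by (meson Suc_lessD finite_lessThan)
    define m where "m = l1 (B k') / s"
    have hm: "\<bar>h j\<bar> \<le> m" if j: "j \<in> B k" for j
    proof -
      have "(\<Sum>i\<in>B k'. \<bar>h j\<bar>) \<le> (\<Sum>i\<in>B k'. \<bar>h i\<bar>)" using o j k' by (intro sum_mono) auto
      then have "s * \<bar>h j\<bar> \<le> l1 (B k')" using o unfolding l1_def by simp
      then show ?thesis unfolding m_def using s by (simp add: le_divide_eq mult.commute)
    qed
    have m0: "m \<ge> 0" unfolding m_def l1_def by (simp add: sum_nonneg)
    have fBk: "finite (B k)" using BN[of k] RK k finite_subset by blast
    have "nsq N (v k) = (\<Sum>j\<in>B k. (h j)^2)" unfolding v_def using nsq_rst BN RK k by blast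
    also have "\<dots> \<le> (\<Sum>j\<in>B k. m^2)"
    proof (rule sum_mono)
      fix j assume "j \<in> B k"
      then have "\<bar>h j\<bar> \<le> m" by (rule hm)
      then show "(h j)^2 \<le> m^2" using power_mono[of "\<bar>h j\<bar>" m 2] by simp
    qed
    also have "\<dots> = card (B k) * m^2" by simp
    also have "\<dots> \<le> s * m^2" using Bcard[of k] RK k by (simp add: mult_right_mono)
    finally have "bb k \<le> sqrt (s * m^2)" unfolding bb_def by (rule real_sqrt_le_mono)
    also have "\<dots> = sqrt s * m" using m0 by (simp add: real_sqrt_mult)
    also have "\<dots> = l1 (B k') / sqrt s" unfolding m_def using s
      by (simp add: field_simps)
    finally show ?thesis using k' by simp
  qed
  have sumb: "(\<Sum>k\<in>R. bb k) \<le> l1 C / sqrt s"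
  proof -
    have "(\<Sum>k\<in>R. bb k) \<le> (\<Sum>k\<in>R. l1 (B (k - 1)) / sqrt s)" using bbk by (rule sum_mono)
    also have "\<dots> = (\<Sum>k\<in>R. l1 (B (k - 1))) / sqrt s" by (simp add: sum_divide_distrib)
    also have "(\<Sum>k\<in>R. l1 (B (k - 1))) \<le> l1 C"
    proof -
      have inj: "inj_on (\<lambda>k. k - 1) R" unfolding R_def by (rule inj_onI) auto
      have "(\<Sum>k\<in>R. l1 (B (k - 1))) = (\<Sum>j\<in>(\<lambda>k. k - 1) ` R. l1 (B j))"
        using sum.reindex[OF inj, of "\<lambda>j. l1 (B j)"] by simp
      also have "\<dots> \<le> (\<Sum>j\<in>{..<K}. l1 (B j))"
        by (rule sum_mono2) (auto simp: R_def l1_def sum_nonneg)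
      also have "\<dots> = l1 (\<Union>k<K. B k)" unfolding l1_def
      proof (rule sum.UNION_disjoint[symmetric])
        show "finite {..<K}" by simp
        show "\<forall>i\<in>{..<K}. finite (B i)" using BN finite_subset by blast
        show "\<forall>i\<in>{..<K}. \<forall>j\<in>{..<K}. i \<noteq> j \<longrightarrow> B i \<inter> B j = {}" using Bdisj by auto
      qed
      also have "\<dots> = l1 C" using Bun by simp
      finally show ?thesis .
    qed
    then have "(\<Sum>k\<in>R. l1 (B (k - 1))) / sqrt s \<le> l1 C / sqrt s" by (simp add: divide_right_mono)
    finally show ?thesis .
  qed
  have l1C0: "l1 C \<ge> 0" unfolding l1_def by (simp add: sum_nonneg)
  have main: "(1 - d) * aw^2 \<le> sqrt 2 * d * aw * (l1 C / sqrt s)"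
  proof -
    have "(1 - d) * aw^2 \<le> d * (a0 + a1) * (\<Sum>k\<in>R. bb k)" using lowr up by linarith
    also have "\<dots> \<le> d * (sqrt 2 * aw) * (l1 C / sqrt s)"
    proof (rule mult_mono)
      show "d * (a0 + a1) \<le> d * (sqrt 2 * aw)" using a0a1 d by (simp add: mult_left_mono)
      show "(\<Sum>k\<in>R. bb k) \<le> l1 C / sqrt s" by (rule sumb)
      show "0 \<le> d * (sqrt 2 * aw)" using d nsq_nonneg[of N w] unfolding aw_def by simp
      show "0 \<le> (\<Sum>k\<in>R. bb k)" unfolding bb_def by (rule sum_nonneg) (simp add: nsq_nonneg)
    qed
    finally show ?thesis by (simp add: algebra_simps)
  qed
  have t0: "l1 T0 \<le> sqrt s * aw"
  proof -
    have "l1 T0 \<le> sqrt (card T0) * sqrt (\<Sum>i\<in>T0. (h i)^2)" unfolding l1_def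
      by (rule l1_le_sqrt_card) (use T0 finite_subset in blast)
    also have "(\<Sum>i\<in>T0. (h i)^2) = nsq N u0" unfolding u0_def using nsq_rst[OF T0(1)] by simp
    also have "sqrt (card T0) * sqrt (nsq N u0) \<le> sqrt s * aw"
    proof (rule mult_mono)
      show "sqrt (card T0) \<le> sqrt s" using T0 by simp
      show "sqrt (nsq N u0) \<le> aw" unfolding aw_def nsqw using nsq_nonneg[of N u1] by simp
    qed (auto simp: nsq_nonneg)
    finally show ?thesis .
  qed
  show ?thesis
  proof (cases "aw = 0")
    case True
    then have "l1 T0 \<le> 0" using t0 by simp
    then have "(1 - d) * l1 T0 \<le> 0" using d by (simp add: mult_nonneg_nonpos)
    also have "0 \<le> sqrt 2 * d * l1 C" using d l1C0 by simp
    finally show ?thesis unfolding l1_def C_def .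
  next
    case False
    then have aw0: "aw > 0" unfolding aw_def using nsq_nonneg[of N w] by simp
    define Q where "Q = sqrt 2 * d * (l1 C / sqrt s)"
    have "((1 - d) * aw) * aw \<le> Q * aw" using main unfolding Q_def by (simp add: power2_eq_square algebra_simps)
    then have "(1 - d) * aw \<le> Q" using aw0 by (rule mult_right_le_imp_le)
    then have "(1 - d) * aw \<le> sqrt 2 * d * (l1 C / sqrt s)" unfolding Q_def .
    then have "(1 - d) * aw * sqrt s \<le> sqrt 2 * d * l1 C" using s by (simp add: field_simps)
    moreover have "(1 - d) * l1 T0 \<le> (1 - d) * (sqrt s * aw)" using t0 d by (simp add: mult_left_mono)
    ultimately show ?thesis unfolding l1_def C_def by (simp add: algebra_simps)
  qed
qed

lemma mv_lin:
  fixes phi :: "real mat"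
  assumes phi: "phi \<in> carrier_mat P N" and v: "v \<in> carrier_vec N" and k: "k < P"
  shows "(phi *\<^sub>v v) $ k = lin N (\<lambda>k j. phi $$ (k, j)) (\<lambda>j. v $ j) k"
proof -
  have "(phi *\<^sub>v v) $ k = row phi k \<bullet> v" using phi k by simp
  also have "\<dots> = (\<Sum>j\<in>{0..<N}. row phi k $ j * v $ j)" using v unfolding scalar_prod_def by simp
  also have "\<dots> = (\<Sum>j<N. phi $$ (k, j) * v $ j)" using phi k by (intro sum.cong) auto
  finally show ?thesis unfolding lin_def .
qed

lemma sq_norm_mv:
  fixes phi :: "real mat"
  assumes phi: "phi \<in> carrier_mat P N" and v: "v \<in> carrier_vec N"
  shows "sq_norm (phi *\<^sub>v v) = ipr N P (\<lambda>k j. phi $$ (k, j)) (\<lambda>j. v $ j) (\<lambda>j. v $ j)"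
  unfolding sq_norm_def ipr_def using phi v mv_lin[OF phi v]
  by (intro sum.cong) (auto simp: power2_eq_square)

lemma sq_norm_v:
  assumes v: "v \<in> carrier_vec N" shows "sq_norm v = nsq N (\<lambda>j. v $ j)"
  unfolding sq_norm_def nsq_def using v by simp

lemma ric_witness:
  fixes phi :: "real mat"
  assumes phi: "phi \<in> carrier_mat P N" and r: "ric S phi < e"
  shows "\<exists>d < e. rip N P (\<lambda>k j. phi $$ (k, j)) d S"
proof -
  define M where "M = (\<lambda>k j. phi $$ (k, j))"
  define D where "D = {d. \<forall>x \<in> carrier_vec (dim_col phi). card (supp_vec x) \<le> S \<longrightarrow>
       (1 - d) * sq_norm x \<le> sq_norm (phi *\<^sub>v x) \<and> sq_norm (phi *\<^sub>v x) \<le> (1 + d) * sq_norm x}"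
  define Cst where "Cst = (\<Sum>k<P. \<Sum>j<N. (M k j)^2)"
  have bnd: "sq_norm (phi *\<^sub>v x) \<le> Cst * sq_norm x" if x: "x \<in> carrier_vec N" for x
  proof -
    have "sq_norm (phi *\<^sub>v x) = (\<Sum>k<P. (\<Sum>j<N. M k j * x $ j)^2)"
      unfolding sq_norm_mv[OF phi x] ipr_def lin_def M_def by (simp add: power2_eq_square)
    also have "\<dots> \<le> (\<Sum>k<P. (\<Sum>j<N. (M k j)^2) * (\<Sum>j<N. (x $ j)^2))"
      by (rule sum_mono) (rule cs_sum, simp)
    also have "\<dots> = Cst * sq_norm x" unfolding Cst_def sq_norm_v[OF x] nsq_def by (simp add: sum_distrib_right)
    finally show ?thesis .
  qed
  have "max 1 Cst \<in> D"
    unfolding D_def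
  proof (intro CollectI ballI impI conjI)
    fix x :: "real vec" assume x: "x \<in> carrier_vec (dim_col phi)"
    then have xN: "x \<in> carrier_vec N" using phi by simp
    have n0: "0 \<le> sq_norm x" "0 \<le> sq_norm (phi *\<^sub>v x)" unfolding sq_norm_def by (auto intro: sum_nonneg)
    show "(1 - max 1 Cst) * sq_norm x \<le> sq_norm (phi *\<^sub>v x)"
      using n0 by (smt (verit) mult_nonpos_nonneg)
    have "Cst * sq_norm x \<le> (1 + max 1 Cst) * sq_norm x" using n0 by (intro mult_right_mono) auto
    then show "sq_norm (phi *\<^sub>v x) \<le> (1 + max 1 Cst) * sq_norm x" using bnd[OF xN] by linarith
  qed
  then have "D \<noteq> {}" by auto
  moreover have "Inf D < e" using r unfolding ric_def D_def .
  ultimately obtain d where d: "d \<in> D" "d < e" using cInf_lessD by blast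
  have "rip N P M d S"
    unfolding rip_def
  proof (intro allI impI)
    fix z :: "nat \<Rightarrow> real" and T assume T: "T \<subseteq> {..<N}" "card T \<le> S" and van: "\<forall>i. i \<notin> T \<longrightarrow> z i = 0"
    define x where "x = vec N z"
    have x: "x \<in> carrier_vec N" unfolding x_def by simp
    have "supp_vec x \<subseteq> T" unfolding supp_vec_def x_def using van by auto
    then have "card (supp_vec x) \<le> S" using T card_mono[of T "supp_vec x"] finite_subset[of T "{..<N}"] by auto
    then have "(1 - d) * sq_norm x \<le> sq_norm (phi *\<^sub>v x) \<and> sq_norm (phi *\<^sub>v x) \<le> (1 + d) * sq_norm x"
      using d(1) x phi unfolding D_def by auto
    moreover have "sq_norm x = nsq N z" unfolding sq_norm_def nsq_def x_def by (rule sum.cong) auto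
    moreover have "sq_norm (phi *\<^sub>v x) = ipr N P M z z"
    proof -
      have "lin N M (\<lambda>j. x $ j) = lin N M z" unfolding x_def by (rule lin_cong) simp
      then show ?thesis unfolding sq_norm_mv[OF phi x] M_def ipr_def by simp
    qed
    ultimately show "(1 - d) * nsq N z \<le> ipr N P M z z \<and> ipr N P M z z \<le> (1 + d) * nsq N z" by simp
  qed
  then show ?thesis using d(2) unfolding M_def by blast
qed

lemma rip_nonneg:
  assumes rip: "rip N P M d S" and N: "N > 0" and S: "S \<ge> 1"
  shows "d \<ge> 0"
proof -
  define z where "z = (\<lambda>j::nat. if j = 0 then (1::real) else 0)"
  have "(1 - d) * nsq N z \<le> ipr N P M z z \<and> ipr N P M z z \<le> (1 + d) * nsq N z"
    using rip[unfolded rip_def, rule_format, of "{0}" z] N S unfolding z_def by auto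
  moreover have "nsq N z = 1"
  proof -
    have "nsq N z = (\<Sum>i<N. if i = 0 then 1 else 0)" unfolding nsq_def z_def by (rule sum.cong) auto
    then show ?thesis using N by simp
  qed
  ultimately have "1 - d \<le> ipr N P M z z \<and> ipr N P M z z \<le> 1 + d" by simp
  then show ?thesis by linarith
qed

lemma recovery:
  fixes phi :: "real mat" and x :: "real vec"
  assumes phi: "phi \<in> carrier_mat P N" and x: "x \<in> carrier_vec N"
    and sp: "card (supp_vec x) \<le> s" and s: "s > 0"
    and r: "ric (2*s) phi < sqrt 2 - 1"
  shows "l1_argmin phi (phi *\<^sub>v x) = {x}"
proof -
  define M where "M = (\<lambda>k j. phi $$ (k, j))"
  obtain d where d: "d < sqrt 2 - 1" "rip N P M d (2*s)" using ric_witness[OF phi r] unfolding M_def by blast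
  have sq2: "sqrt 2 * d < 1 - d" if "d \<ge> 0"
  proof -
    have p: "0 < sqrt 2 + 1" using real_sqrt_ge_zero[of 2] by linarith
    have "(sqrt 2 + 1) * d < (sqrt 2 + 1) * (sqrt 2 - 1)" using d(1) p by (intro mult_strict_left_mono) auto
    also have "\<dots> = 1" by (simp add: algebra_simps)
    finally show ?thesis by (simp add: algebra_simps)
  qed
  have "sqrt 2 < 2" by (rule real_less_lsqrt) auto
  then have d1: "d < 1" using d(1) by linarith
  have strict: "l1_norm x < l1_norm w" if w: "w \<in> carrier_vec N" "phi *\<^sub>v w = phi *\<^sub>v x" "w \<noteq> x" for w
  proof -
    define h where "h = (\<lambda>i. w $ i - x $ i)"
    obtain i0 where i0: "i0 < N" "w $ i0 \<noteq> x $ i0" using w x by (metis carrier_vecD eq_vecI)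
    then have N0: "N > 0" by simp
    have d0: "d \<ge> 0" using rip_nonneg[OF d(2) N0] s by simp
    have ker: "\<forall>k<P. lin N M h k = 0"
    proof (intro allI impI)
      fix k assume k: "k < P"
      have "lin N M h k = lin N M (\<lambda>i. 1 * w $ i + (-1) * x $ i) k" unfolding h_def by simp
      also have "\<dots> = (phi *\<^sub>v w) $ k - (phi *\<^sub>v x) $ k"
        unfolding lin_comb mv_lin[OF phi w(1) k] mv_lin[OF phi x k] M_def by simp
      finally show "lin N M h k = 0" using w(2) by simp
    qed
    define T0 where "T0 = supp_vec x"
    have T0: "T0 \<subseteq> {..<N}" "card T0 \<le> s" unfolding T0_def supp_vec_def using x sp by (auto simp: supp_vec_def)
    define C where "C = {..<N} - T0"
    define a where "a = (\<Sum>i\<in>T0. \<bar>h i\<bar>)"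
    define c where "c = (\<Sum>i\<in>C. \<bar>h i\<bar>)"
    have ns: "(1 - d) * a \<le> sqrt 2 * d * c" unfolding a_def c_def C_def
      by (rule nsp[OF d(2) s d0 d1 ker T0])
    have ac: "a < c"
    proof (cases "c = 0")
      case True
      then have "a \<le> 0" using ns d1 by (simp add: mult_le_0_iff)
      moreover have "a \<ge> 0" unfolding a_def by (simp add: sum_nonneg)
      ultimately have "a = 0" by simp
      have "\<forall>i\<in>T0. \<bar>h i\<bar> = 0" using \<open>a = 0\<close> T0 finite_subset unfolding a_def
        by (subst (asm) sum_nonneg_eq_0_iff) auto
      moreover have "\<forall>i\<in>C. \<bar>h i\<bar> = 0" using True unfolding c_def C_def
        by (subst (asm) sum_nonneg_eq_0_iff) auto
      ultimately have "h i0 = 0" using i0 unfolding C_def by auto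
      then show ?thesis using i0 unfolding h_def by simp
    next
      case False
      have "c \<ge> 0" unfolding c_def by (simp add: sum_nonneg)
      then have c0: "c > 0" using False by linarith
      have "(1 - d) * a \<le> sqrt 2 * d * c" by (rule ns)
      also have "\<dots> < (1 - d) * c" using sq2[OF d0] c0 by (simp add: mult_strict_right_mono)
      finally show ?thesis using d1 by simp
    qed
    have fT0: "finite T0" using T0 finite_subset by blast
    have "l1_norm w = (\<Sum>i<N. \<bar>w $ i\<bar>)" unfolding l1_norm_def using w by simp
    also have "\<dots> = (\<Sum>i\<in>C. \<bar>w $ i\<bar>) + (\<Sum>i\<in>T0. \<bar>w $ i\<bar>)"
      unfolding C_def by (rule sum.subset_diff[OF T0(1)]) simp
    also have "(\<Sum>i\<in>C. \<bar>w $ i\<bar>) = c" unfolding c_def h_def C_def T0_def supp_vec_def using x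
      by (intro sum.cong) auto
    also have "(\<Sum>i\<in>T0. \<bar>w $ i\<bar>) \<ge> (\<Sum>i\<in>T0. \<bar>x $ i\<bar>) - a"
    proof -
      have "(\<Sum>i\<in>T0. \<bar>x $ i\<bar>) \<le> (\<Sum>i\<in>T0. \<bar>w $ i\<bar> + \<bar>h i\<bar>)"
        unfolding h_def by (rule sum_mono) auto
      then show ?thesis unfolding a_def by (simp add: sum.distrib)
    qed
    moreover have "(\<Sum>i\<in>T0. \<bar>x $ i\<bar>) = l1_norm x"
    proof -
      have "l1_norm x = (\<Sum>i\<in>{..<N} - T0. \<bar>x $ i\<bar>) + (\<Sum>i\<in>T0. \<bar>x $ i\<bar>)"
        unfolding l1_norm_def using x by (simp add: sum.subset_diff[OF T0(1)])
      moreover have "(\<Sum>i\<in>{..<N} - T0. \<bar>x $ i\<bar>) = 0" unfolding T0_def supp_vec_def using x by simp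
      ultimately show ?thesis by simp
    qed
    ultimately show ?thesis using ac by linarith
  qed
  show ?thesis
  proof (intro equalityI subsetI)
    fix z assume z: "z \<in> l1_argmin phi (phi *\<^sub>v x)"
    then have zc: "z \<in> carrier_vec N" "phi *\<^sub>v z = phi *\<^sub>v x" and le: "l1_norm z \<le> l1_norm x"
      unfolding l1_argmin_def using phi x by auto
    show "z \<in> {x}"
    proof (rule ccontr)
      assume "z \<notin> {x}"
      then have "l1_norm x < l1_norm z" using strict zc by auto
      then show False using le by simp
    qed
  next
    fix z assume "z \<in> {x}"
    then have zx: "z = x" by simp
    show "z \<in> l1_argmin phi (phi *\<^sub>v x)"
      unfolding l1_argmin_def zx
    proof (intro CollectI conjI ballI impI)
      show "x \<in> carrier_vec (dim_col phi)" using x phi by simp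
      show "phi *\<^sub>v x = phi *\<^sub>v x" ..
      fix w assume "w \<in> carrier_vec (dim_col phi)" "phi *\<^sub>v w = phi *\<^sub>v x"
      then show "l1_norm x \<le> l1_norm w" using strict[of w] phi by (cases "w = x") auto
    qed
  qed
qed

lemma traj_Suc: "traj N f h A x0 (Suc t) = net_step N f h A (traj N f h A x0 t)"
  unfolding traj_def by simp

lemma traj_0: "traj N f h A x0 0 = x0"
  unfolding traj_def by simp

lemma sparsity:
  fixes A :: "nat \<Rightarrow> nat \<Rightarrow> real"
  assumes adj01: "\<forall>i<N. \<forall>j<N. A i j = 0 \<or> A i j = 1"
      and assm1: "\<forall>i<N. f i 0 = 0"
      and h00: "\<forall>i<N. \<forall>j<N. h i j 0 0 = 0"
      and q: "q < N"
  shows "card {i. i < N \<and> traj N f h A (pinch e q) t i \<noteq> 0} \<le> (max_out_deg N A + 1) ^ t"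
proof (induction t)
  case 0
  have "{i. i < N \<and> traj N f h A (pinch e q) 0 i \<noteq> 0} \<subseteq> {q}" unfolding traj_0 pinch_def by auto
  then have "card {i. i < N \<and> traj N f h A (pinch e q) 0 i \<noteq> 0} \<le> card {q}" by (intro card_mono) auto
  then show ?case by simp
next
  case (Suc t)
  define x where "x = traj N f h A (pinch e q) t"
  define S where "S = {i. i < N \<and> x i \<noteq> 0}"
  define D where "D = max_out_deg N A"
  have fS: "finite S" unfolding S_def by simp
  have sub: "{i. i < N \<and> traj N f h A (pinch e q) (Suc t) i \<noteq> 0} \<subseteq> S \<union> (\<Union>j\<in>S. first_level N A j)"
  proof
    fix i assume i: "i \<in> {i. i < N \<and> traj N f h A (pinch e q) (Suc t) i \<noteq> 0}"
    show "i \<in> S \<union> (\<Union>j\<in>S. first_level N A j)"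
    proof (rule ccontr)
      assume nin: "i \<notin> S \<union> (\<Union>j\<in>S. first_level N A j)"
      have iN: "i < N" using i by simp
      then have xi: "x i = 0" using nin unfolding S_def by auto
      have "\<forall>j\<in>{..<N}. A i j * h i j (x i) (x j) = 0"
      proof
        fix j assume j: "j \<in> {..<N}"
        show "A i j * h i j (x i) (x j) = 0"
        proof (cases "x j = 0")
          case True then show ?thesis using xi h00 iN j by simp
        next
          case False
          then have "j \<in> S" using j unfolding S_def by simp
          then have "A i j \<noteq> 1" using nin iN unfolding first_level_def by auto
          then have "A i j = 0" using adj01 iN j by auto
          then show ?thesis by simp
        qed
      qed
      then have "(\<Sum>j<N. A i j * h i j (x i) (x j)) = 0" by (rule sum.neutral)
      then have "traj N f h A (pinch e q) (Suc t) i = 0"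
        unfolding traj_Suc x_def[symmetric] net_step_def using iN xi assm1 by simp
      then show False using i by simp
    qed
  qed
  have fl: "card (first_level N A j) \<le> D" if j: "j \<in> S" for j
  proof -
    have "j < N" using j unfolding S_def by simp
    then have "out_deg N A j \<le> D" unfolding D_def max_out_deg_def by (intro Max_ge) auto
    then show ?thesis unfolding out_deg_def first_level_def .
  qed
  have "card {i. i < N \<and> traj N f h A (pinch e q) (Suc t) i \<noteq> 0} \<le> card (S \<union> (\<Union>j\<in>S. first_level N A j))"
    by (rule card_mono[OF _ sub]) (use fS in \<open>auto simp: first_level_def\<close>)
  also have "\<dots> \<le> card S + card (\<Union>j\<in>S. first_level N A j)" by (rule card_Un_le)
  also have "card (\<Union>j\<in>S. first_level N A j) \<le> (\<Sum>j\<in>S. card (first_level N A j))" by (rule card_UN_le[OF fS])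
  also have "\<dots> \<le> (\<Sum>j\<in>S. D)" using fl by (rule sum_mono)
  also have "\<dots> = card S * D" by simp
  finally have "card {i. i < N \<and> traj N f h A (pinch e q) (Suc t) i \<noteq> 0} \<le> card S * (D + 1)" by (simp add: algebra_simps)
  also have "\<dots> \<le> (D + 1) ^ t * (D + 1)" using Suc.IH unfolding S_def x_def D_def by (intro mult_right_mono) auto
  finally show ?case unfolding D_def by (simp add: mult.commute)
qed

theorem mainTheorem5:
  fixes N P :: nat
    and f :: "nat \<Rightarrow> real \<Rightarrow> real"
    and h :: "nat \<Rightarrow> nat \<Rightarrow> real \<Rightarrow> real \<Rightarrow> real"
    and A :: "nat \<Rightarrow> nat \<Rightarrow> real"
    and \<delta> :: real
    and s :: "nat \<Rightarrow> nat"
    and psi :: "nat \<Rightarrow> nat \<Rightarrow> (nat \<Rightarrow> real) \<Rightarrow> real"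
    and c :: "nat \<Rightarrow> nat \<Rightarrow> real"
    and eps :: "nat \<Rightarrow> real"
    and phi :: "nat \<Rightarrow> real mat"
  defines "smax \<equiv> Max (s ` {..<N})"
      and "X \<equiv> (\<lambda>q t. traj N f h A (pinch (eps q) q) t)"
  assumes adj01: "\<forall>i<N. \<forall>j<N. A i j = 0 \<or> A i j = 1"
      and noloop: "\<forall>i<N. A i i = 0"
      and assm1: "\<forall>i<N. f i 0 = 0"
      and delta_pos: "\<delta> > 0"
      and assm2: "\<forall>i<N. \<forall>j<N. h i j 0 0 = 0 \<and> (\<forall>v. 0 < \<bar>v\<bar> \<and> \<bar>v\<bar> < \<delta> \<longrightarrow> h i j 0 v \<noteq> 0)"
      and coeff_nz: "\<forall>i<N. \<forall>l<s i. c i l \<noteq> 0"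
      and model: "\<forall>i<N. \<forall>x0 t. (\<forall>k. N \<le> k \<longrightarrow> x0 k = 0) \<longrightarrow>
                    traj N f h A x0 (Suc t) i = (\<Sum>l<s i. c i l * psi i l (traj N f h A x0 t))"
      and pinching: "\<forall>q<N. 0 < \<bar>eps q\<bar> \<and> \<bar>eps q\<bar> < \<delta>"
      and rank: "\<forall>i<N. vec_space.rank (N * smax) (Psi_mat N smax (s i) X (psi i)) = s i"
      and phi_dim: "\<forall>q<N. phi q \<in> carrier_mat P N"
      and phi_rip: "\<forall>q<N. ric (2 * (max_out_deg N A + 1) ^ smax) (phi q) < sqrt 2 - 1"
  shows "(\<forall>q<N. \<forall>t\<in>{1..smax}.
            l1_argmin (phi q) (phi q *\<^sub>v vec N (X q t)) = {vec N (X q t)})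
       \<and> (\<forall>q<N. {i. i < N \<and> X q 1 i \<noteq> 0} - {q} = first_level N A q)
       \<and> (\<forall>i<N.
            {cv \<in> carrier_vec (s i). Psi_mat N smax (s i) X (psi i) *\<^sub>v cv = b_vec N smax X i}
              = {vec (s i) (c i)}
          \<and> vec (s i) (c i) = pinv (Psi_mat N smax (s i) X (psi i)) *\<^sub>v b_vec N smax X i
          \<and> (\<exists>B. mat_inverse (transpose_mat (Psi_mat N smax (s i) X (psi i)) * Psi_mat N smax (s i) X (psi i)) = Some B
               \<and> vec (s i) (c i) = (B * transpose_mat (Psi_mat N smax (s i) X (psi i))) *\<^sub>v b_vec N smax X i))"
proof -
  have Xq: "\<And>q t. X q t = traj N f h A (pinch (eps q) q) t" using assms(2) by simp
  define Dl where "Dl = max_out_deg N A"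
  define sp where "sp = (Dl + 1) ^ smax"
  have sp0: "sp > 0" unfolding sp_def by simp
  have h00: "\<forall>i<N. \<forall>j<N. h i j 0 0 = 0" using assm2 by auto
  have partA: "\<forall>q<N. \<forall>t\<in>{1..smax}. l1_argmin (phi q) (phi q *\<^sub>v vec N (X q t)) = {vec N (X q t)}"
  proof (intro allI impI ballI)
    fix q t assume q: "q < N" and t: "t \<in> {1..smax}"
    have "card {i. i < N \<and> X q t i \<noteq> 0} \<le> (Dl + 1) ^ t"
      unfolding Xq Dl_def by (rule sparsity[of N A f h q, OF adj01 assm1 h00 q])
    also have "\<dots> \<le> sp" unfolding sp_def using t by (intro power_increasing) auto
    finally have c: "card {i. i < N \<and> X q t i \<noteq> 0} \<le> sp" .
    have "supp_vec (vec N (X q t)) = {i. i < N \<and> X q t i \<noteq> 0}" unfolding supp_vec_def by auto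
    then have "card (supp_vec (vec N (X q t))) \<le> sp" using c by simp
    moreover have "ric (2 * sp) (phi q) < sqrt 2 - 1" using phi_rip q unfolding sp_def Dl_def by simp
    ultimately show "l1_argmin (phi q) (phi q *\<^sub>v vec N (X q t)) = {vec N (X q t)}"
      using recovery[of "phi q" P N "vec N (X q t)" sp] phi_dim q sp0 by simp
  qed
  have partB: "\<forall>q<N. {i. i < N \<and> X q 1 i \<noteq> 0} - {q} = first_level N A q"
  proof (intro allI impI)
    fix q assume q: "q < N"
    have val: "X q 1 i = A i q * h i q 0 (eps q)" if i: "i < N" "i \<noteq> q" for i
    proof -
      define p where "p = pinch (eps q) q"
      have "X q 1 i = f i (p i) + (\<Sum>j<N. A i j * h i j (p i) (p j))"
        unfolding Xq One_nat_def traj_Suc traj_0 net_step_def p_def using i by simp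
      also have "(\<Sum>j<N. A i j * h i j (p i) (p j)) = (\<Sum>j<N. if j = q then A i q * h i q 0 (eps q) else 0)"
        using i h00 unfolding p_def pinch_def by (intro sum.cong) auto
      also have "\<dots> = A i q * h i q 0 (eps q)" using q by simp
      finally show ?thesis using i assm1 unfolding p_def pinch_def by simp
    qed
    have hne: "h i q 0 (eps q) \<noteq> 0" if "i < N" for i using assm2 pinching q that by blast
    show "{i. i < N \<and> X q 1 i \<noteq> 0} - {q} = first_level N A q"
    proof (intro equalityI subsetI)
      fix i assume "i \<in> {i. i < N \<and> X q 1 i \<noteq> 0} - {q}"
      then have i: "i < N" "i \<noteq> q" "X q 1 i \<noteq> 0" by auto
      then have "A i q \<noteq> 0" using val by auto
      then have "A i q = 1" using adj01 i q by auto
      then show "i \<in> first_level N A q" unfolding first_level_def using i by simp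
    next
      fix i assume "i \<in> first_level N A q"
      then have i: "i < N" "A i q = 1" unfolding first_level_def by auto
      then have "i \<noteq> q" using noloop by auto
      then have "X q 1 i \<noteq> 0" using val[OF i(1)] i hne by simp
      then show "i \<in> {i. i < N \<and> X q 1 i \<noteq> 0} - {q}" using i \<open>i \<noteq> q\<close> by simp
    qed
  qed
  have partC: "\<forall>i<N.
            {cv \<in> carrier_vec (s i). Psi_mat N smax (s i) X (psi i) *\<^sub>v cv = b_vec N smax X i}
              = {vec (s i) (c i)}
          \<and> vec (s i) (c i) = pinv (Psi_mat N smax (s i) X (psi i)) *\<^sub>v b_vec N smax X i
          \<and> (\<exists>B. mat_inverse (transpose_mat (Psi_mat N smax (s i) X (psi i)) * Psi_mat N smax (s i) X (psi i)) = Some B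
               \<and> vec (s i) (c i) = (B * transpose_mat (Psi_mat N smax (s i) X (psi i))) *\<^sub>v b_vec N smax X i)"
  proof (intro allI impI)
    fix i assume i: "i < N"
    define Psi where "Psi = Psi_mat N smax (s i) X (psi i)"
    have Pc: "Psi \<in> carrier_mat (N * smax) (s i)" unfolding Psi_def Psi_mat_def by simp
    have eq: "Psi *\<^sub>v vec (s i) (c i) = b_vec N smax X i"
    proof (rule eq_vecI)
      show "dim_vec (Psi *\<^sub>v vec (s i) (c i)) = dim_vec (b_vec N smax X i)" using Pc unfolding b_vec_def by simp
      fix r assume "r < dim_vec (b_vec N smax X i)"
      then have r: "r < N * smax" unfolding b_vec_def by simp
      define q where "q = r div smax"
      define t where "t = r mod smax"
      have qN: "q < N" unfolding q_def using r by (simp add: less_mult_imp_div_less)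
      have van: "\<forall>k. N \<le> k \<longrightarrow> pinch (eps q) q k = 0" unfolding pinch_def using qN by auto
      have "(Psi *\<^sub>v vec (s i) (c i)) $ r = row Psi r \<bullet> vec (s i) (c i)" using Pc r by simp
      also have "\<dots> = (\<Sum>l\<in>{0..<s i}. psi i l (X q t) * c i l)"
        unfolding scalar_prod_def using Pc r unfolding Psi_def Psi_mat_def q_def t_def by (intro sum.cong) auto
      also have "\<dots> = (\<Sum>l<s i. c i l * psi i l (traj N f h A (pinch (eps q) q) t))"
        unfolding Xq by (intro sum.cong) (auto simp: mult.commute)
      also have "\<dots> = traj N f h A (pinch (eps q) q) (Suc t) i" using model i van by simp
      also have "\<dots> = b_vec N smax X i $ r" unfolding b_vec_def Xq q_def t_def using r by simp
      finally show "(Psi *\<^sub>v vec (s i) (c i)) $ r = b_vec N smax X i $ r" .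
    qed
    have rk: "vec_space.rank (N * smax) Psi = s i" using rank i unfolding Psi_def by simp
    show "{cv \<in> carrier_vec (s i). Psi_mat N smax (s i) X (psi i) *\<^sub>v cv = b_vec N smax X i}
              = {vec (s i) (c i)}
          \<and> vec (s i) (c i) = pinv (Psi_mat N smax (s i) X (psi i)) *\<^sub>v b_vec N smax X i
          \<and> (\<exists>B. mat_inverse (transpose_mat (Psi_mat N smax (s i) X (psi i)) * Psi_mat N smax (s i) X (psi i)) = Some B
               \<and> vec (s i) (c i) = (B * transpose_mat (Psi_mat N smax (s i) X (psi i))) *\<^sub>v b_vec N smax X i)"
      using ls_unique[OF Pc rk vec_carrier eq] unfolding Psi_def .
  qed
  show ?thesis using partA partB partC by blast
qed

end
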